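(* Let $n \ge 2$, $b \in \{1,\ldots,n\}$, and let $\alpha_1,\ldots,\alpha_n$ be real numbers with $0 \le \alpha_i \le \alpha_j$ for $1 \le i \le j \le b$ and $\alpha_i = \alpha_j \le 0$ for all $i,j > b$. Consider the problem of minimizing $f(x)=x_1^{\alpha_1}\cdots x_n^{\alpha_n}$ over $\mathcal{X}^n$. Then: (a) there exists a minimizer belonging to $\mathcal{Y}^n$; (b) if $\alpha_i \ne 0$ for all $i$, then every minimizer belongs to $\mathcal{Y}^n$; (c) if $b = n-1$, $\alpha_i > 0$ for all $i \ne n$ and $\alpha_n = 0$, then every minimizer belongs to $\mathcal{Y}^n$.
   Context: The Sylvester sequence: $s_1 = 2$, $s_i = \prod_{j=1}^{i-1} s_j + 1$ for $i\ge2$. $\mathcal{X}^n$ is the set of $x\in\mathbb{R}^n$ with $x_1+\cdots+x_n = 1$, $1 \ge x_1 \ge \cdots \ge x_n \ge 0$, and $x_1\cdots x_j \le x_{j+1}+\cdots+x_n$ for all $j\in\{1,\ldots,n-1\}$ (all coordinates of elements of $\mathcal{X}^n$ are positive, so $f$ is well defined). For $l\in\{1,\ldots,n\}$, $\bar x(l) := \big(\frac{1}{s_1},\ldots,\frac{1}{s_{l-1}}, \frac{1}{(n-l+1)(s_l-1)},\ldots,\frac{1}{(n-l+1)(s_l-1)}\big)\in\mathbb{R}^n$ (the last value repeated $n-l+1$ times), and $\mathcal{Y}^n := \{\bar x(l) : l = 1,\ldots,n\} \subseteq \mathcal{X}^n$. *)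

theory Defs
  imports Complex_Main
begin

text \<open>Sylvester sequence, indexed from 1: s 1 = 2, s i = (prod_{j=1}^{i-1} s j) + 1.
  (The value at index 0 is irrelevant.)\<close>
function sylv :: "nat \<Rightarrow> nat" where
  "sylv i = (if i \<le> 1 then 2 else (\<Prod>j\<in>{1..<i}. sylv j) + 1)"
  by auto
termination by (relation "measure id") auto

text \<open>Vectors in R^n are functions nat => real, coordinates 1..n.\<close>
definition Xset :: "nat \<Rightarrow> (nat \<Rightarrow> real) set" where
  "Xset n = {x. (\<Sum>i=1..n. x i) = 1 \<and> x 1 \<le> 1
     \<and> (\<forall>i\<in>{1..<n}. x (i+1) \<le> x i) \<and> 0 \<le> x n
     \<and> (\<forall>j\<in>{1..<n}. (\<Prod>i=1..j. x i) \<le> (\<Sum>i=j+1..n. x i))}"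

definition xbar :: "nat \<Rightarrow> nat \<Rightarrow> nat \<Rightarrow> real" where
  "xbar n l i = (if i < l then 1 / real (sylv i)
                 else 1 / (real (n - l + 1) * (real (sylv l) - 1)))"

definition inY :: "nat \<Rightarrow> (nat \<Rightarrow> real) \<Rightarrow> bool" where
  "inY n x = (\<exists>l\<in>{1..n}. \<forall>i\<in>{1..n}. x i = xbar n l i)"

definition fobj :: "nat \<Rightarrow> (nat \<Rightarrow> real) \<Rightarrow> (nat \<Rightarrow> real) \<Rightarrow> real" where
  "fobj n \<alpha> x = (\<Prod>i=1..n. x i powr \<alpha> i)"

definition is_minimizer :: "nat \<Rightarrow> (nat \<Rightarrow> real) \<Rightarrow> (nat \<Rightarrow> real) \<Rightarrow> bool" where
  "is_minimizer n \<alpha> x = (x \<in> Xset n \<and> (\<forall>y\<in>Xset n. fobj n \<alpha> x \<le> fobj n \<alpha> y))"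

end

theory Submission
  imports Defs
begin

declare sylv.simps[simp del]

lemma sylv_ge2: "sylv i \<ge> 2"
proof (induction i rule: less_induct)
  case (less i)
  show ?case
  proof (cases "i \<le> 1")
    case True then show ?thesis by (subst sylv.simps) simp
  next
    case False
    have "(\<Prod>j\<in>{1..<i}. sylv j) \<ge> 1"
      by (rule prod_ge_1) (use less in force)
    then show ?thesis using False by (subst sylv.simps) simp
  qed
qed

lemma sylv_1: "sylv 1 = 2" by (subst sylv.simps) simp
lemma sylv_1': "sylv (Suc 0) = 2" using sylv_1 by simp

lemma sylv_Suc: assumes "i \<ge> 1" shows "sylv (Suc i) = sylv i * (sylv i - 1) + 1"
proof (cases "i = 1")
  case True
  have "sylv 2 = (\<Prod>j\<in>{1..<2}. sylv j) + 1" by (subst sylv.simps) simp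
  moreover have "(\<Prod>j\<in>{1..<2}. sylv j) = sylv 1" by (simp add: numeral_2_eq_2)
  ultimately have "sylv 2 = 3" by (simp add: sylv_1')
  then show ?thesis using True sylv_1 by (simp add: numeral_2_eq_2)
next
  case False
  with assms have i2: "i \<ge> 2" by simp
  have "sylv (Suc i) = (\<Prod>j\<in>{1..<Suc i}. sylv j) + 1" using i2 by (subst sylv.simps) simp
  also have "(\<Prod>j\<in>{1..<Suc i}. sylv j) = (\<Prod>j\<in>{1..<i}. sylv j) * sylv i"
    using assms by (simp add: prod.atLeastLessThan_Suc)
  also have "(\<Prod>j\<in>{1..<i}. sylv j) = sylv i - 1" using i2 by (subst (2) sylv.simps) simp
  finally show ?thesis by (simp add: mult.commute)
qed

definition s :: "nat \<Rightarrow> real" where "s i = real (sylv i)"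

lemma s_ge2: "s i \<ge> 2" unfolding s_def using sylv_ge2[of i] by simp

lemma s_1: "s 1 = 2" unfolding s_def by (simp add: sylv_1')
lemma s_1': "s (Suc 0) = 2" using s_1 by simp

lemma s_Suc: "i \<ge> 1 \<Longrightarrow> s (Suc i) - 1 = s i * (s i - 1)"
  unfolding s_def using sylv_Suc[of i] sylv_ge2[of i] by (simp add: of_nat_diff)

lemma s_mono_Suc: "i \<ge> 1 \<Longrightarrow> s i \<le> s (Suc i)"
proof -
  assume "i \<ge> 1"
  hence "s (Suc i) = s i * (s i - 1) + 1" using s_Suc[of i] by simp
  moreover have "s i * (s i - 1) + 1 - s i = (s i - 1)^2" by (simp add: power2_eq_square algebra_simps)
  ultimately show ?thesis by (metis diff_ge_0_iff_ge zero_le_power2)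
qed

definition ee :: "nat \<Rightarrow> real" where "ee j = 1 / (s (Suc j) - 1)"

lemma ee_0: "ee 0 = 1" unfolding ee_def by (simp add: s_1')

lemma ee_pos: "ee j > 0" unfolding ee_def using s_ge2[of "Suc j"] by simp

lemma ee_le1: "ee j \<le> 1" unfolding ee_def using s_ge2[of "Suc j"] by simp

lemma ee_Suc: "ee (Suc i) = ee i - 1 / s (Suc i)"
proof -
  have h: "s (Suc (Suc i)) - 1 = s (Suc i) * (s (Suc i) - 1)" by (rule s_Suc) simp
  have a: "s (Suc i) \<ge> 2" by (rule s_ge2)
  show ?thesis unfolding ee_def h using a by (simp add: field_simps)
qed

lemma ee_Suc_div: "ee (Suc i) = ee i / s (Suc i)"
proof -
  have h: "s (Suc (Suc i)) - 1 = s (Suc i) * (s (Suc i) - 1)" by (rule s_Suc) simp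
  have a: "s (Suc i) \<ge> 2" by (rule s_ge2)
  show ?thesis unfolding ee_def h using a by (simp add: field_simps)
qed

lemma sum_inv_s: "(\<Sum>k=1..j. 1 / s k) = 1 - ee j"
  by (induction j) (auto simp: ee_0 ee_Suc)

lemma sum_inv_s': "(\<Sum>k=Suc 0..j. 1 / s k) = 1 - ee j" using sum_inv_s by simp

lemma prod_inv_s: "(\<Prod>k=1..j. 1 / s k) = ee j"
  by (induction j) (auto simp: ee_0 ee_Suc_div)

lemma prod_inv_s': "(\<Prod>k=Suc 0..j. 1 / s k) = ee j" using prod_inv_s by simp

lemma sum_inv_s_range: "j \<le> m \<Longrightarrow> (\<Sum>k=Suc j..m. 1 / s k) = ee j - ee m"
proof (induction m)
  case 0 then show ?case by simp
next
  case (Suc m)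
  show ?case
  proof (cases "j = Suc m")
    case True then show ?thesis by simp
  next
    case False
    with Suc have "j \<le> m" by simp
    with Suc show ?thesis by (simp add: ee_Suc)
  qed
qed

lemma ee_mono: "i \<le> j \<Longrightarrow> ee j \<le> ee i"
  using sum_inv_s_range[of i j] s_ge2
  by (smt (verit) sum_nonneg divide_nonneg_nonneg)

lemma tang: "0 < x \<Longrightarrow> 0 < y \<Longrightarrow> (x - y) / x \<le> ln x - ln (y::real)"
proof -
  assume x: "0 < x" and y: "0 < y"
  have "ln (y/x) \<le> y/x - 1" using x y by (intro ln_le_minus_one) simp
  hence "ln y - ln x \<le> (y - x)/x" using x y by (simp add: ln_divide_pos diff_divide_distrib)
  moreover have "(x-y)/x = -((y-x)/x)" by (simp add: minus_divide_left)
  ultimately show ?thesis by linarith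
qed

lemma tang_eq: "0 < x \<Longrightarrow> 0 < y \<Longrightarrow> ln x - ln y = (x - y) / x \<Longrightarrow> x = (y::real)"
proof -
  assume x: "0 < x" and y: "0 < y" and e: "ln x - ln y = (x - y) / x"
  have "ln (y/x) = y/x - 1" using x y e by (simp add: ln_divide_pos diff_divide_distrib)
  hence "y/x = 1" using x y by (intro ln_eq_minus_one) simp_all
  thus ?thesis using x by simp
qed

lemma tang_strict: "0 < x \<Longrightarrow> 0 < y \<Longrightarrow> x \<noteq> y \<Longrightarrow> (x - y) / x < ln x - ln (y::real)"
  using tang tang_eq by fastforce

lemma ln_comb:
  fixes a c t :: real
  assumes a: "0 < a" and c: "0 < c" and t: "0 \<le> t" "t \<le> 1"
  shows "(1-t) * ln a + t * ln c \<le> ln ((1-t)*a + t*c)"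
proof -
  define m where "m = (1-t)*a + t*c"
  have m: "0 < m" unfolding m_def using a c t
    by (cases "t = 0") (auto intro: add_nonneg_pos add_pos_nonneg)
  have 1: "(m - a)/m \<le> ln m - ln a" by (rule tang[OF m a])
  have 2: "(m - c)/m \<le> ln m - ln c" by (rule tang[OF m c])
  have "(1-t)*((m - a)/m) + t*((m-c)/m) \<le> (1-t)*(ln m - ln a) + t*(ln m - ln c)"
    using 1 2 t by (intro add_mono mult_left_mono) auto
  moreover have "(1-t)*((m - a)/m) + t*((m-c)/m) = 0" using m unfolding m_def
    by (simp add: field_simps)
  ultimately show ?thesis unfolding m_def[symmetric] by (simp add: algebra_simps)
qed

lemma ln_comb_strict:
  fixes a c t :: real
  assumes a: "0 < a" and c: "0 < c" and t: "0 < t" "t < 1" and ac: "a \<noteq> c"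
  shows "(1-t) * ln a + t * ln c < ln ((1-t)*a + t*c)"
proof -
  define m where "m = (1-t)*a + t*c"
  have m: "0 < m" unfolding m_def using a c t by (intro add_pos_pos) auto
  have "m \<noteq> a"
  proof
    assume "m = a"
    hence "t * (c - a) = 0" unfolding m_def by (simp add: algebra_simps)
    thus False using t ac by simp
  qed
  hence 1: "(m - a)/m < ln m - ln a" using tang_strict[OF m a] by simp
  have 2: "(m - c)/m \<le> ln m - ln c" by (rule tang[OF m c])
  have "(1-t)*((m - a)/m) + t*((m-c)/m) < (1-t)*(ln m - ln a) + t*(ln m - ln c)"
    using 1 2 t by (intro add_less_le_mono mult_strict_left_mono mult_left_mono) auto
  moreover have "(1-t)*((m - a)/m) + t*((m-c)/m) = 0" using m unfolding m_def
    by (simp add: field_simps)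
  ultimately show ?thesis unfolding m_def[symmetric] by (simp add: algebra_simps)
qed

lemma abel_prefix:
  fixes w d :: "nat \<Rightarrow> real"
  assumes "\<forall>i. 1 \<le> i \<longrightarrow> i < j \<longrightarrow> w i \<le> w (Suc i)"
    and "\<forall>k. 1 \<le> k \<longrightarrow> k < j \<longrightarrow> (\<Sum>i=1..k. d i) \<le> 0"
  shows "w j * (\<Sum>i=1..j. d i) \<le> (\<Sum>i=1..j. w i * d i)"
  using assms
proof (induction j)
  case 0 then show ?case by simp
next
  case (Suc j)
  show ?case
  proof (cases "j = 0")
    case True then show ?thesis by simp
  next
    case False
    have IH: "w j * (\<Sum>i=1..j. d i) \<le> (\<Sum>i=1..j. w i * d i)"
      using Suc.IH Suc.prems by auto
    have P: "(\<Sum>i=1..j. d i) \<le> 0" using Suc.prems False by auto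
    have W: "w j \<le> w (Suc j)" using Suc.prems False by auto
    have "w (Suc j) * (\<Sum>i=1..j. d i) \<le> w j * (\<Sum>i=1..j. d i)"
      using P W by (simp add: mult_right_mono_neg)
    then show ?thesis using IH by (simp add: algebra_simps)
  qed
qed

lemma abel_suffix:
  fixes w d :: "nat \<Rightarrow> real"
  assumes W: "\<forall>i. t \<le> i \<longrightarrow> i < b \<longrightarrow> w i \<le> w (Suc i)"
    and D: "\<forall>k. t < k \<longrightarrow> k \<le> b \<longrightarrow> 0 \<le> (\<Sum>i=k..b. d i)"
    and tb: "t \<le> Suc b"
  shows "w t * (\<Sum>i=t..b. d i) \<le> (\<Sum>i=t..b. w i * d i)"
  using tb
proof (induction t rule: inc_induct)
  case base then show ?case by simp
next
  case (step m)
  have split1: "(\<Sum>i=m..b. d i) = d m + (\<Sum>i=Suc m..b. d i)"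
    using step.hyps by (intro sum.atLeast_Suc_atMost) simp
  have split2: "(\<Sum>i=m..b. w i * d i) = w m * d m + (\<Sum>i=Suc m..b. w i * d i)"
    using step.hyps by (intro sum.atLeast_Suc_atMost) simp
  have "w m * (\<Sum>i=Suc m..b. d i) \<le> w (Suc m) * (\<Sum>i=Suc m..b. d i)"
  proof (cases "m < b")
    case True
    then show ?thesis using W D step.hyps by (intro mult_right_mono) auto
  next
    case False then show ?thesis by simp
  qed
  then show ?case using step.IH split1 split2 by (simp add: algebra_simps)
qed

lemma head_ineq:
  fixes x y \<alpha> :: "nat \<Rightarrow> real" and b :: nat
  assumes pos: "\<forall>i\<in>{1..b}. 0 < x i \<and> 0 < y i"
    and dec: "\<forall>i. 1 \<le> i \<longrightarrow> i < b \<longrightarrow> x (Suc i) \<le> x i"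
    and al0: "\<forall>i. 1 \<le> i \<longrightarrow> i \<le> b \<longrightarrow> 0 \<le> \<alpha> i"
    and alm: "\<forall>i. 1 \<le> i \<longrightarrow> i < b \<longrightarrow> \<alpha> i \<le> \<alpha> (Suc i)"
    and D: "\<forall>t. 1 \<le> t \<longrightarrow> t \<le> b \<longrightarrow> (\<Sum>i=t..b. y i) \<le> (\<Sum>i=t..b. x i)"
  shows "(\<Sum>i=1..b. \<alpha> i * ln (y i)) \<le> (\<Sum>i=1..b. \<alpha> i * ln (x i))"
    and "(\<forall>i\<in>{1..b}. 0 < \<alpha> i) \<Longrightarrow> (\<Sum>i=1..b. \<alpha> i * ln (y i)) = (\<Sum>i=1..b. \<alpha> i * ln (x i))
         \<Longrightarrow> \<forall>i\<in>{1..b}. x i = y i"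
proof -
  define w where "w i = \<alpha> i / x i" for i
  define d where "d i = x i - y i" for i
  define E where "E i = \<alpha> i * (ln (x i) - ln (y i)) - w i * d i" for i
  have E0: "\<forall>i\<in>{1..b}. 0 \<le> E i"
  proof
    fix i assume i: "i \<in> {1..b}"
    have "(x i - y i)/x i \<le> ln (x i) - ln (y i)" using pos i by (intro tang) auto
    hence "\<alpha> i * ((x i - y i)/x i) \<le> \<alpha> i * (ln (x i) - ln (y i))"
      using al0 i by (intro mult_left_mono) auto
    thus "0 \<le> E i" unfolding E_def w_def d_def by simp
  qed
  have Wm: "\<forall>i. 1 \<le> i \<longrightarrow> i < b \<longrightarrow> w i \<le> w (Suc i)"
  proof (intro allI impI)
    fix i assume i: "1 \<le> i" "i < b"
    have xi: "0 < x i" and xs: "0 < x (Suc i)" using pos i by auto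
    have "\<alpha> i / x i \<le> \<alpha> (Suc i) / x i" using alm i xi by (intro divide_right_mono) auto
    also have "\<dots> \<le> \<alpha> (Suc i) / x (Suc i)" using al0 i xi xs dec
      by (intro divide_left_mono) auto
    finally show "w i \<le> w (Suc i)" unfolding w_def .
  qed
  have Dk: "0 \<le> (\<Sum>i=k..b. d i)" if "1 \<le> k" "k \<le> b" for k
  proof -
    have "(\<Sum>i=k..b. y i) \<le> (\<Sum>i=k..b. x i)" using D that by blast
    thus ?thesis unfolding d_def by (simp add: sum_subtractf)
  qed
  have Dd: "\<forall>k. 1 < k \<longrightarrow> k \<le> b \<longrightarrow> 0 \<le> (\<Sum>i=k..b. d i)"
    using Dk by simp
  have ab: "w 1 * (\<Sum>i=1..b. d i) \<le> (\<Sum>i=1..b. w i * d i)"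
  proof (cases "b = 0")
    case True then show ?thesis by simp
  next
    case False
    show ?thesis by (rule abel_suffix[OF Wm Dd]) simp
  qed
  have w1: "0 \<le> w 1 * (\<Sum>i=1..b. d i)"
  proof (cases "b = 0")
    case True then show ?thesis by simp
  next
    case False
    have "0 \<le> \<alpha> 1" "0 < x 1" using al0 pos False by auto
    hence "0 \<le> w 1" unfolding w_def by simp
    moreover have "0 \<le> (\<Sum>i=1..b. d i)" using Dk False by simp
    ultimately show ?thesis by simp
  qed
  have key: "(\<Sum>i=1..b. \<alpha> i * ln (x i)) - (\<Sum>i=1..b. \<alpha> i * ln (y i))
        = (\<Sum>i=1..b. E i) + (\<Sum>i=1..b. w i * d i)"
  proof -
    have "(\<Sum>i=1..b. E i) + (\<Sum>i=1..b. w i * d i) = (\<Sum>i=1..b. E i + w i * d i)"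
      by (simp add: sum.distrib)
    also have "\<dots> = (\<Sum>i=1..b. \<alpha> i * ln (x i) - \<alpha> i * ln (y i))"
      by (rule sum.cong) (simp_all add: E_def right_diff_distrib)
    also have "\<dots> = (\<Sum>i=1..b. \<alpha> i * ln (x i)) - (\<Sum>i=1..b. \<alpha> i * ln (y i))"
      by (simp add: sum_subtractf)
    finally show ?thesis by simp
  qed
  have sE: "0 \<le> (\<Sum>i=1..b. E i)" using E0 by (intro sum_nonneg) auto
  show "(\<Sum>i=1..b. \<alpha> i * ln (y i)) \<le> (\<Sum>i=1..b. \<alpha> i * ln (x i))"
    using key sE ab w1 by linarith
  assume apos: "\<forall>i\<in>{1..b}. 0 < \<alpha> i"
    and eq: "(\<Sum>i=1..b. \<alpha> i * ln (y i)) = (\<Sum>i=1..b. \<alpha> i * ln (x i))"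
  have "(\<Sum>i=1..b. E i) = 0" using key sE ab w1 eq by linarith
  hence Ez: "\<forall>i\<in>{1..b}. E i = 0" using E0 by (subst (asm) sum_nonneg_eq_0_iff) auto
  show "\<forall>i\<in>{1..b}. x i = y i"
  proof
    fix i assume i: "i \<in> {1..b}"
    have e0: "E i = 0" using Ez i by blast
    hence "\<alpha> i * (ln (x i) - ln (y i)) - \<alpha> i / x i * (x i - y i) = 0"
      by (simp only: E_def w_def d_def)
    moreover have "\<alpha> i / x i * (x i - y i) = \<alpha> i * ((x i - y i)/x i)" by simp
    ultimately have h: "\<alpha> i * (ln (x i) - ln (y i)) = \<alpha> i * ((x i - y i)/x i)" by linarith
    have "0 < \<alpha> i" using apos i by blast
    hence ne: "\<alpha> i \<noteq> 0" by simp
    have "ln (x i) - ln (y i) = (x i - y i)/x i" by (rule iffD1[OF mult_left_cancel[OF ne] h])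
    moreover have "0 < x i" "0 < y i" using pos i by auto
    ultimately show "x i = y i" using tang_eq by blast
  qed
qed


lemma tail_ineq:
  fixes x :: "nat \<Rightarrow> real" and b n :: nat and \<beta> c :: real
  assumes bn: "b < n" and pos: "\<forall>i\<in>{Suc b..n}. 0 < x i"
    and c: "c = (\<Sum>i=Suc b..n. x i) / real (n - b)" and be: "\<beta> \<le> 0"
  shows "\<beta> * real (n - b) * ln c \<le> (\<Sum>i=Suc b..n. \<beta> * ln (x i))"
    and "\<beta> < 0 \<Longrightarrow> \<beta> * real (n - b) * ln c = (\<Sum>i=Suc b..n. \<beta> * ln (x i))
         \<Longrightarrow> \<forall>i\<in>{Suc b..n}. x i = c"
proof -
  have nb: "real (n - b) > 0" using bn by simp
  have Spos: "0 < (\<Sum>i=Suc b..n. x i)" using pos bn by (intro sum_pos) auto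
  have cpos: "0 < c" using c nb Spos by simp
  define E where "E i = ln c - ln (x i) - (c - x i)/c" for i
  have E0: "\<forall>i\<in>{Suc b..n}. 0 \<le> E i"
  proof
    fix i assume i: "i \<in> {Suc b..n}"
    have "(c - x i)/c \<le> ln c - ln (x i)" using pos i by (intro tang[OF cpos]) auto
    thus "0 \<le> E i" unfolding E_def by simp
  qed
  have cardn: "card {Suc b..n} = n - b" by simp
  have sum0: "(\<Sum>i=Suc b..n. (c - x i)/c) = 0"
  proof -
    have "(\<Sum>i=Suc b..n. (c - x i)/c) = (\<Sum>i=Suc b..n. (c - x i))/c" by (simp add: sum_divide_distrib)
    also have "(\<Sum>i=Suc b..n. (c - x i)) = real (n-b) * c - (\<Sum>i=Suc b..n. x i)"
      by (simp add: sum_subtractf)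
    also have "\<dots> = 0" using c nb by simp
    finally show ?thesis by simp
  qed
  have key: "real (n - b) * ln c - (\<Sum>i=Suc b..n. ln (x i)) = (\<Sum>i=Suc b..n. E i)"
    unfolding E_def using sum0 by (simp add: sum_subtractf)
  have sE: "0 \<le> (\<Sum>i=Suc b..n. E i)" using E0 by (intro sum_nonneg) auto
  have "\<beta> * (real (n - b) * ln c - (\<Sum>i=Suc b..n. ln (x i))) \<le> 0"
    using key sE be by (simp add: mult_nonpos_nonneg)
  moreover have "\<beta> * (real (n - b) * ln c - (\<Sum>i=Suc b..n. ln (x i)))
      = \<beta> * real (n - b) * ln c - (\<Sum>i=Suc b..n. \<beta> * ln (x i))"
    by (simp add: sum_distrib_left right_diff_distrib)
  ultimately show "\<beta> * real (n - b) * ln c \<le> (\<Sum>i=Suc b..n. \<beta> * ln (x i))"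
    by simp
  assume bneg: "\<beta> < 0" and eq: "\<beta> * real (n - b) * ln c = (\<Sum>i=Suc b..n. \<beta> * ln (x i))"
  have "\<beta> * (real (n - b) * ln c - (\<Sum>i=Suc b..n. ln (x i)))
      = \<beta> * real (n - b) * ln c - (\<Sum>i=Suc b..n. \<beta> * ln (x i))"
    by (simp add: sum_distrib_left right_diff_distrib)
  hence "\<beta> * (real (n - b) * ln c - (\<Sum>i=Suc b..n. ln (x i))) = 0" using eq by simp
  hence "(\<Sum>i=Suc b..n. E i) = 0" using key bneg by simp
  hence Ez: "\<forall>i\<in>{Suc b..n}. E i = 0" using E0 by (subst (asm) sum_nonneg_eq_0_iff) auto
  show "\<forall>i\<in>{Suc b..n}. x i = c"
  proof
    fix i assume i: "i \<in> {Suc b..n}"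
    have "ln c - ln (x i) = (c - x i)/c" using Ez i unfolding E_def by simp
    moreover have "0 < x i" using pos i by auto
    ultimately have "c = x i" using tang_eq cpos by blast
    thus "x i = c" by simp
  qed
qed

lemma sum_split_at:
  fixes f :: "nat \<Rightarrow> 'a::comm_monoid_add"
  assumes "m \<le> Suc j" "j \<le> n"
  shows "sum f {m..n} = sum f {m..j} + sum f {Suc j..n}"
proof -
  have "{m..n} = {m..j} \<union> {Suc j..n}" using assms by auto
  moreover have "{m..j} \<inter> {Suc j..n} = {}" by auto
  ultimately show ?thesis by (simp add: sum.union_disjoint)
qed

lemma prod_split_at:
  fixes f :: "nat \<Rightarrow> 'a::comm_monoid_mult"
  assumes "m \<le> Suc j" "j \<le> n"
  shows "prod f {m..n} = prod f {m..j} * prod f {Suc j..n}"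
proof -
  have "{m..n} = {m..j} \<union> {Suc j..n}" using assms by auto
  moreover have "{m..j} \<inter> {Suc j..n} = {}" by auto
  ultimately show ?thesis by (simp add: prod.union_disjoint)
qed

lemma X_sum: "x \<in> Xset n \<Longrightarrow> (\<Sum>i=1..n. x i) = 1" unfolding Xset_def by auto

lemma X_adj: "x \<in> Xset n \<Longrightarrow> 1 \<le> i \<Longrightarrow> i < n \<Longrightarrow> x (Suc i) \<le> x i"
  unfolding Xset_def by auto

lemma X_C: "x \<in> Xset n \<Longrightarrow> 1 \<le> j \<Longrightarrow> j < n \<Longrightarrow> (\<Prod>i=1..j. x i) \<le> (\<Sum>i=Suc j..n. x i)"
  unfolding Xset_def by auto

lemma X_dec:
  assumes X: "x \<in> Xset n" and i: "1 \<le> i" "i \<le> k" "k \<le> n"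
  shows "x k \<le> x i"
proof -
  have "k \<le> n \<longrightarrow> x k \<le> x i" using i(2)
  proof (induction k rule: dec_induct)
    case base then show ?case by simp
  next
    case (step m)
    show ?case
    proof
      assume "Suc m \<le> n"
      hence "x (Suc m) \<le> x m" using X_adj[OF X] step.hyps i by auto
      thus "x (Suc m) \<le> x i" using step \<open>Suc m \<le> n\<close> by auto
    qed
  qed
  thus ?thesis using i by simp
qed

lemma X_pos:
  assumes X: "x \<in> Xset n" and i: "1 \<le> i" "i \<le> n"
  shows "0 < x i"
proof -
  have n1: "1 \<le> n" using i by simp
  have x1: "0 < x 1"
  proof -
    have "(\<Sum>i=1..n. x i) \<le> (\<Sum>i=1..n. x 1)" using X_dec[OF X] by (intro sum_mono) auto
    hence "1 \<le> real n * x 1" using X_sum[OF X] by simp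
    thus ?thesis using n1 by (smt (verit) mult_nonneg_nonpos of_nat_0_le_iff)
  qed
  have "\<forall>k\<in>{1..i}. 0 < x k" using i
  proof (induction i rule: dec_induct)
    case base then show ?case using x1 by simp
  next
    case (step m)
    have allm: "\<forall>k\<in>{1..m}. 0 < x k" using step by simp
    have m1: "1 \<le> m" "m < n" using step by auto
    have pp: "0 < (\<Prod>i=1..m. x i)" using allm by (intro prod_pos) auto
    have C: "(\<Prod>i=1..m. x i) \<le> (\<Sum>i=Suc m..n. x i)" by (rule X_C[OF X m1])
    have "(\<Sum>i=Suc m..n. x i) \<le> (\<Sum>i=Suc m..n. x (Suc m))"
      using X_dec[OF X] m1 by (intro sum_mono) auto
    moreover have "(\<Sum>i=Suc m..n. x (Suc m)) = real (n - m) * x (Suc m)" by simp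
    ultimately have "0 < real (n - m) * x (Suc m)" using pp C by linarith
    hence "0 < x (Suc m)" using m1 by (simp add: zero_less_mult_iff)
    then show ?case using allm by (auto simp: le_Suc_eq)
  qed
  thus ?thesis using i by auto
qed

lemma L1:
  assumes X: "x \<in> Xset n" and j: "j < n"
  shows "(\<Sum>i=1..j. x i) \<le> 1 - ee j"
  using j
proof (induction j rule: less_induct)
  case (less j)
  show ?case
  proof (cases "j = 0")
    case True then show ?thesis by (simp add: ee_0)
  next
    case False
    hence j1: "1 \<le> j" by simp
    show ?thesis
    proof (rule ccontr)
      assume "\<not> ?thesis"
      hence big: "1 - ee j < (\<Sum>i=1..j. x i)" by simp
      define d where "d i = x i - 1 / s i" for i
      define w where "w i = 1 / x i" for i
      have xpos: "0 < x i" if "1 \<le> i" "i \<le> j" for i using X_pos[OF X] that less.prems by simp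
      have dsum: "(\<Sum>i=1..k. d i) = (\<Sum>i=1..k. x i) - (1 - ee k)" for k
        unfolding d_def by (simp add: sum_subtractf sum_inv_s')
      have P: "\<forall>k. 1 \<le> k \<longrightarrow> k < j \<longrightarrow> (\<Sum>i=1..k. d i) \<le> 0"
        using less.IH less.prems dsum by auto
      have W: "\<forall>i. 1 \<le> i \<longrightarrow> i < j \<longrightarrow> w i \<le> w (Suc i)"
      proof (intro allI impI)
        fix i assume i: "1 \<le> i" "i < j"
        have "x (Suc i) \<le> x i" using X_adj[OF X] i less.prems by simp
        moreover have "0 < x (Suc i)" using xpos i by simp
        ultimately show "w i \<le> w (Suc i)" unfolding w_def by (simp add: frac_le)
      qed
      have ab: "w j * (\<Sum>i=1..j. d i) \<le> (\<Sum>i=1..j. w i * d i)" by (rule abel_prefix[OF W P])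
      have "0 < w j * (\<Sum>i=1..j. d i)" using big dsum xpos[of j] j1 unfolding w_def by simp
      hence pos1: "0 < (\<Sum>i=1..j. w i * d i)" using ab by linarith
      have "(\<Sum>i=1..j. w i * d i) \<le> (\<Sum>i=1..j. ln (x i) - ln (1 / s i))"
      proof (rule sum_mono)
        fix i assume "i \<in> {1..j}"
        hence "0 < x i" using xpos by simp
        moreover have "0 < 1 / s i" using s_ge2[of i] by simp
        ultimately have "(x i - 1 / s i) / x i \<le> ln (x i) - ln (1 / s i)" by (rule tang)
        thus "w i * d i \<le> ln (x i) - ln (1 / s i)" unfolding w_def d_def by simp
      qed
      hence "0 < (\<Sum>i=1..j. ln (x i)) - (\<Sum>i=1..j. ln (1 / s i))"
        using pos1 by (simp add: sum_subtractf)
      moreover have "(\<Sum>i=1..j. ln (x i)) = ln (\<Prod>i=1..j. x i)"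
      proof -
        have nz: "\<And>i. i \<in> {1..j} \<Longrightarrow> x i \<noteq> 0" using xpos by (metis atLeastAtMost_iff less_irrefl)
        show ?thesis by (rule ln_prod[OF _ nz, symmetric]) simp
      qed
      moreover have "(\<Sum>i=1..j. ln (1 / s i)) = ln (ee j)"
      proof -
        have "(\<Sum>i=1..j. ln (1 / s i)) = ln (\<Prod>i=1..j. 1 / s i)"
          using s_ge2 by (subst ln_prod) (auto, smt (verit))
        thus ?thesis by (simp add: prod_inv_s')
      qed
      ultimately have "ln (ee j) < ln (\<Prod>i=1..j. x i)" by simp
      hence gt: "ee j < (\<Prod>i=1..j. x i)"
        using ee_pos xpos by (subst (asm) ln_less_cancel_iff) (auto intro: prod_pos)
      have C: "(\<Prod>i=1..j. x i) \<le> (\<Sum>i=Suc j..n. x i)" by (rule X_C[OF X j1 less.prems])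
      have "(\<Sum>i=1..n. x i) = (\<Sum>i=1..j. x i) + (\<Sum>i=Suc j..n. x i)"
        using less.prems by (intro sum_split_at) auto
      hence "(\<Sum>i=Suc j..n. x i) = 1 - (\<Sum>i=1..j. x i)" using X_sum[OF X] by simp
      thus False using gt C big by linarith
    qed
  qed
qed

lemma L1T:
  assumes X: "x \<in> Xset n" and j: "j < n"
  shows "ee j \<le> (\<Sum>i=Suc j..n. x i)"
proof -
  have "(\<Sum>i=1..n. x i) = (\<Sum>i=1..j. x i) + (\<Sum>i=Suc j..n. x i)"
    using j by (intro sum_split_at) auto
  thus ?thesis using X_sum[OF X] L1[OF X j] by simp
qed

definition cc :: "nat \<Rightarrow> nat \<Rightarrow> real" where "cc n l = ee (l - 1) / real (n - l + 1)"

lemma ee_pred: "1 \<le> l \<Longrightarrow> ee (l - 1) = 1 / (s l - 1)"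
  unfolding ee_def by simp

lemma xbar_val: "1 \<le> l \<Longrightarrow> xbar n l i = (if i < l then 1 / s i else cc n l)"
  unfolding xbar_def cc_def s_def using ee_pred[of l] by (simp add: s_def)

lemma cc_pos: "0 < cc n l" unfolding cc_def using ee_pos by simp

lemma cc_le_ee: "cc n l \<le> ee (l - 1)"
  unfolding cc_def using ee_pos[of "l-1"] by (simp add: divide_le_eq)

lemma inv_s_le1: "1 / s i \<le> 1" using s_ge2[of i] by simp

lemma xbar_T_lo:
  assumes l: "1 \<le> l" "l \<le> n" and j: "j < l"
  shows "(\<Sum>i=Suc j..n. xbar n l i) = ee j"
proof -
  have "(\<Sum>i=Suc j..n. xbar n l i) = (\<Sum>i=Suc j..l-1. xbar n l i) + (\<Sum>i=Suc (l-1)..n. xbar n l i)"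
    using l j by (intro sum_split_at) auto
  also have "(\<Sum>i=Suc j..l-1. xbar n l i) = (\<Sum>i=Suc j..l-1. 1 / s i)"
    using l by (intro sum.cong) (auto simp: xbar_val)
  also have "\<dots> = ee j - ee (l-1)" using j by (intro sum_inv_s_range) simp
  also have "(\<Sum>i=Suc (l-1)..n. xbar n l i) = (\<Sum>i=Suc (l-1)..n. cc n l)"
    using l by (intro sum.cong) (auto simp: xbar_val)
  also have "\<dots> = real (n - l + 1) * cc n l" using l by simp
  also have "\<dots> = ee (l - 1)" unfolding cc_def by simp
  finally show ?thesis by simp
qed

lemma xbar_T_hi:
  assumes l: "1 \<le> l" and j: "l \<le> Suc j"
  shows "(\<Sum>i=Suc j..n. xbar n l i) = real (n - j) * cc n l"
proof -
  have "(\<Sum>i=Suc j..n. xbar n l i) = (\<Sum>i=Suc j..n. cc n l)"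
    using l j by (intro sum.cong) (auto simp: xbar_val)
  thus ?thesis by simp
qed

lemma xbar_in_X:
  assumes n: "2 \<le> n" and l: "1 \<le> l" "l \<le> n"
  shows "xbar n l \<in> Xset n"
proof -
  let ?x = "xbar n l"
  have sum1: "(\<Sum>i=1..n. ?x i) = 1" using xbar_T_lo[OF l, of 0] l by (simp add: ee_0)
  have le1: "?x i \<le> 1" for i using l cc_le_ee[of n l] ee_le1[of "l-1"] inv_s_le1[of i]
    by (auto simp: xbar_val)
  have nn: "0 \<le> ?x n" using l cc_pos[of n l] s_ge2[of n] by (auto simp: xbar_val)
  have dec: "?x (i+1) \<le> ?x i" if i: "i \<in> {1..<n}" for i
  proof (cases "i + 1 < l")
    case True
    hence "?x (i+1) = 1 / s (Suc i)" "?x i = 1 / s i" using l by (auto simp: xbar_val)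
    moreover have "s i \<le> s (Suc i)" using i by (intro s_mono_Suc) simp
    ultimately show ?thesis using s_ge2[of i] by (simp add: frac_le)
  next
    case False
    show ?thesis
    proof (cases "i + 1 = l")
      case True
      hence "?x (i+1) = cc n l" "?x i = 1 / s i" using l by (auto simp: xbar_val)
      moreover have "l - 1 = i" using True by simp
      hence "cc n l \<le> ee i" using cc_le_ee[of n l] by simp
      moreover have "ee i \<le> 1 / s i"
      proof -
        have "ee i = 1 / (s i * (s i - 1))" unfolding ee_def using s_Suc[of i] i by simp
        moreover have "s i \<le> s i * (s i - 1)" using s_ge2[of i] by (simp add: algebra_simps)
        ultimately show ?thesis using s_ge2[of i] by (simp add: frac_le)
      qed
      ultimately show ?thesis by simp
    next
      case False
      hence "?x (i+1) = cc n l" "?x i = cc n l" using l \<open>\<not> i + 1 < l\<close> by (auto simp: xbar_val)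
      thus ?thesis by simp
    qed
  qed
  have C: "(\<Prod>i=1..j. ?x i) \<le> (\<Sum>i=j+1..n. ?x i)" if j: "j \<in> {1..<n}" for j
  proof (cases "j < l")
    case True
    have "(\<Prod>i=1..j. ?x i) = (\<Prod>i=1..j. 1 / s i)" using True by (intro prod.cong) (auto simp: xbar_val)
    also have "\<dots> = ee j" by (rule prod_inv_s)
    also have "\<dots> = (\<Sum>i=j+1..n. ?x i)" using xbar_T_lo[OF l True] by simp
    finally show ?thesis by simp
  next
    case False
    have "(\<Prod>i=1..j. ?x i) = (\<Prod>i=1..l-1. ?x i) * (\<Prod>i=Suc (l-1)..j. ?x i)"
      using False l by (intro prod_split_at) auto
    also have "(\<Prod>i=1..l-1. ?x i) = ee (l - 1)"
    proof -
      have "(\<Prod>i=1..l-1. ?x i) = (\<Prod>i=1..l-1. 1 / s i)" using l by (intro prod.cong) (auto simp: xbar_val)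
      thus ?thesis by (simp add: prod_inv_s')
    qed
    also have "(\<Prod>i=Suc (l-1)..j. ?x i) = (\<Prod>i=Suc (l-1)..j. cc n l)"
      using l by (intro prod.cong) (auto simp: xbar_val)
    also have "\<dots> = cc n l ^ (j - l + 1)" using l False by (simp add: Suc_diff_le)
    finally have pe: "(\<Prod>i=1..j. ?x i) = ee (l - 1) * cc n l ^ (j - l + 1)" .
    have c1: "cc n l \<le> 1" using cc_le_ee[of n l] ee_le1[of "l-1"] by simp
    have "j - l + 1 = Suc (j - l)" using False by simp
    hence "cc n l ^ (j - l + 1) = cc n l * cc n l ^ (j - l)" by (simp only: power_Suc)
    also have "\<dots> \<le> cc n l * 1" using c1 cc_pos[of n l]
      by (intro mult_left_mono power_le_one) auto
    finally have "cc n l ^ (j - l + 1) \<le> cc n l" by simp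
    hence "ee (l - 1) * cc n l ^ (j - l + 1) \<le> 1 * cc n l"
      using ee_le1[of "l-1"] ee_pos[of "l-1"] cc_pos[of n l]
      by (intro mult_mono) auto
    also have "\<dots> \<le> real (n - j) * cc n l" using j cc_pos[of n l] by simp
    also have "\<dots> = (\<Sum>i=j+1..n. ?x i)" using xbar_T_hi[OF l(1), of j n] False by simp
    finally show ?thesis using pe by simp
  qed
  show ?thesis unfolding Xset_def using sum1 le1 nn dec C by auto
qed

definition yv :: "nat \<Rightarrow> nat \<Rightarrow> real \<Rightarrow> nat \<Rightarrow> real" where
  "yv n l v i = (if i < l then 1 / s i else if i = l then v else (ee (l - 1) - v) / real (n - l))"

definition G :: "nat \<Rightarrow> (nat \<Rightarrow> real) \<Rightarrow> (nat \<Rightarrow> real) \<Rightarrow> real" where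
  "G n \<alpha> x = (\<Sum>i=1..n. \<alpha> i * ln (x i))"

lemma G_cong: "(\<And>i. 1 \<le> i \<Longrightarrow> i \<le> n \<Longrightarrow> x i = y i) \<Longrightarrow> G n \<alpha> x = G n \<alpha> y"
  unfolding G_def by (intro sum.cong) auto

lemma ee_gt_inv_s: "1 \<le> l \<Longrightarrow> 1 / s l < ee (l - 1)"
proof -
  assume l: "1 \<le> l"
  have "ee (Suc (l-1)) = ee (l-1) - 1 / s (Suc (l-1))" by (rule ee_Suc)
  hence "ee l = ee (l-1) - 1 / s l" using l by simp
  thus ?thesis using ee_pos[of l] by simp
qed

lemma cc_lt_ee: "1 \<le> l \<Longrightarrow> l < n \<Longrightarrow> cc n l < ee (l - 1)"
  unfolding cc_def using ee_pos[of "l - 1"] by (simp add: divide_less_eq)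

lemma aux_cc: "0 < (m::real) \<Longrightarrow> (e - e / (m + 1)) / m = e / (m + 1)"
proof -
  assume m: "0 < m"
  hence m1: "m + 1 \<noteq> 0" by simp
  have "e - e / (m + 1) = e * m / (m + 1)" using m1 by (simp add: field_simps)
  thus ?thesis using m by simp
qed

lemma aux_interp: "(a::real) < b \<Longrightarrow> v = (1 - (v - a) / (b - a)) * a + (v - a) / (b - a) * b"
proof -
  assume ab: "a < b"
  have gq: "\<And>q::real. (1 - q) * a + q * b = a + q * (b - a)" by (simp add: algebra_simps)
  have "(1 - (v - a) / (b - a)) * a + (v - a) / (b - a) * b = a + (v - a) / (b - a) * (b - a)"
    by (rule gq)
  also have "(v - a) / (b - a) * (b - a) = v - a" using ab by simp
  finally show ?thesis by simp
qed

lemma yv_xbar0: "1 \<le> l \<Longrightarrow> l < n \<Longrightarrow> yv n l (cc n l) i = xbar n l i"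
proof -
  assume l: "1 \<le> l" "l < n"
  have "(ee (l - 1) - cc n l) / real (n - l) = cc n l"
  proof -
    have nl: "real (n - l + 1) = real (n - l) + 1" by simp
    have "real (n - l) > 0" using l by simp
    thus ?thesis unfolding cc_def nl by (rule aux_cc)
  qed
  thus ?thesis unfolding yv_def using l by (simp add: xbar_val)
qed

lemma yv_xbar1: "1 \<le> l \<Longrightarrow> l < n \<Longrightarrow> yv n l (1 / s l) i = xbar n (Suc l) i"
proof -
  assume l: "1 \<le> l" "l < n"
  have "ee (Suc (l-1)) = ee (l-1) - 1 / s (Suc (l-1))" by (rule ee_Suc)
  hence e: "ee (l - 1) - 1 / s l = ee l" using l by simp
  have "(ee (l - 1) - 1 / s l) / real (n - l) = cc n (Suc l)"
    unfolding e cc_def using l by simp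
  show ?thesis
  proof (cases "i < l")
    case True then show ?thesis unfolding yv_def using l by (auto simp: xbar_val)
  next
    case False
    show ?thesis
    proof (cases "i = l")
      case True then show ?thesis unfolding yv_def using l by (auto simp: xbar_val)
    next
      case False
      then show ?thesis unfolding yv_def using l \<open>\<not> i < l\<close> \<open>_ = cc n (Suc l)\<close> by (auto simp: xbar_val)
    qed
  qed
qed

lemma G_yv:
  assumes l: "1 \<le> l" "l < n"
  shows "G n \<alpha> (yv n l v) = (\<Sum>i=1..l-1. \<alpha> i * ln (1 / s i)) + \<alpha> l * ln v
           + (\<Sum>i=Suc l..n. \<alpha> i) * ln ((ee (l - 1) - v) / real (n - l))"
proof -
  have "G n \<alpha> (yv n l v) = (\<Sum>i=1..l-1. \<alpha> i * ln (yv n l v i)) + (\<Sum>i=Suc (l-1)..n. \<alpha> i * ln (yv n l v i))"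
    unfolding G_def using l by (intro sum_split_at) auto
  also have "(\<Sum>i=1..l-1. \<alpha> i * ln (yv n l v i)) = (\<Sum>i=1..l-1. \<alpha> i * ln (1 / s i))"
    using l by (intro sum.cong) (auto simp: yv_def)
  also have "(\<Sum>i=Suc (l-1)..n. \<alpha> i * ln (yv n l v i)) = \<alpha> l * ln v + (\<Sum>i=Suc l..n. \<alpha> i * ln (yv n l v i))"
    using l by (subst sum.atLeast_Suc_atMost) (auto simp: yv_def)
  also have "(\<Sum>i=Suc l..n. \<alpha> i * ln (yv n l v i)) = (\<Sum>i=Suc l..n. \<alpha> i * ln ((ee (l - 1) - v) / real (n - l)))"
    by (intro sum.cong) (auto simp: yv_def)
  also have "\<dots> = (\<Sum>i=Suc l..n. \<alpha> i) * ln ((ee (l - 1) - v) / real (n - l))"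
    by (simp add: sum_distrib_right)
  finally show ?thesis by (simp add: add.assoc)
qed

lemma curve:
  assumes l: "1 \<le> l" "l < n" and al: "0 \<le> \<alpha> l"
    and v: "cc n l \<le> v" "v \<le> 1 / s l"
  shows "min (G n \<alpha> (xbar n l)) (G n \<alpha> (xbar n (Suc l))) \<le> G n \<alpha> (yv n l v)"
    and "0 < \<alpha> l \<Longrightarrow> cc n l < v \<Longrightarrow> v < 1 / s l
         \<Longrightarrow> min (G n \<alpha> (xbar n l)) (G n \<alpha> (xbar n (Suc l))) < G n \<alpha> (yv n l v)"
proof -
  define K where "K = (\<Sum>i=1..l-1. \<alpha> i * ln (1 / s i))"
  define A where "A = (\<Sum>i=Suc l..n. \<alpha> i)"
  define e where "e = ee (l - 1)"
  define m where "m = real (n - l)"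
  define h where "h u = (e - u) / m" for u
  define F where "F u = K + \<alpha> l * ln u + A * ln (h u)" for u
  have m: "0 < m" unfolding m_def using l by simp
  have FG: "G n \<alpha> (yv n l u) = F u" for u unfolding F_def K_def A_def h_def e_def m_def
    using G_yv[OF l] by simp
  let ?v0 = "cc n l" and ?v1 = "1 / s l"
  have F0: "G n \<alpha> (xbar n l) = F ?v0"
    using FG[of ?v0] yv_xbar0[OF l] by (metis G_cong)
  have F1: "G n \<alpha> (xbar n (Suc l)) = F ?v1"
    using FG[of ?v1] yv_xbar1[OF l] by (metis G_cong)
  have v0pos: "0 < ?v0" by (rule cc_pos)
  have v1e: "?v1 < e" unfolding e_def by (rule ee_gt_inv_s[OF l(1)])
  have hpos: "0 < h u" if "u < e" for u unfolding h_def using that m by simp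
  have main: "min (F ?v0) (F ?v1) \<le> F v \<and> (0 < \<alpha> l \<longrightarrow> ?v0 < v \<longrightarrow> v < ?v1 \<longrightarrow> min (F ?v0) (F ?v1) < F v)"
  proof (cases "v = ?v0")
    case True then show ?thesis by simp
  next
    case False
    hence vv: "?v0 < v" using v by simp
    hence v01: "?v0 < ?v1" using v by simp
    show ?thesis
    proof (cases "0 \<le> A")
      case A: True
      define t where "t = (v - ?v0) / (?v1 - ?v0)"
      have t: "0 < t" "t \<le> 1" unfolding t_def using vv v01 v by (auto simp: divide_le_eq)
      have vt: "v = (1 - t) * ?v0 + t * ?v1" unfolding t_def using v01 by (rule aux_interp)
      have ht: "h v = (1 - t) * h ?v0 + t * h ?v1" unfolding h_def vt using m
        by (simp add: field_simps)
      have hv0: "0 < h ?v0" using hpos v01 v1e by simp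
      have hv1: "0 < h ?v1" using hpos v1e by simp
      have l1: "(1 - t) * ln ?v0 + t * ln ?v1 \<le> ln v"
        unfolding vt by (rule ln_comb) (use v0pos v01 t s_ge2[of l] in auto)
      have l2: "(1 - t) * ln (h ?v0) + t * ln (h ?v1) \<le> ln (h v)"
        unfolding ht by (rule ln_comb) (use hv0 hv1 t in auto)
      have comb: "(1 - t) * F ?v0 + t * F ?v1 \<le> F v"
      proof -
        have "(1 - t) * F ?v0 + t * F ?v1 = K + \<alpha> l * ((1 - t) * ln ?v0 + t * ln ?v1)
               + A * ((1 - t) * ln (h ?v0) + t * ln (h ?v1))"
          unfolding F_def by (simp add: algebra_simps)
        also have "\<dots> \<le> K + \<alpha> l * ln v + A * ln (h v)"
          using l1 l2 al A by (intro add_mono mult_left_mono) auto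
        finally show ?thesis unfolding F_def .
      qed
      have mn: "min (F ?v0) (F ?v1) \<le> (1 - t) * F ?v0 + t * F ?v1"
      proof -
        have "(1 - t) * min (F ?v0) (F ?v1) + t * min (F ?v0) (F ?v1) \<le> (1 - t) * F ?v0 + t * F ?v1"
          using t by (intro add_mono mult_left_mono) auto
        thus ?thesis by (simp add: algebra_simps)
      qed
      have strict: "min (F ?v0) (F ?v1) < F v" if ap: "0 < \<alpha> l" and vl: "v < ?v1"
      proof -
        have t1: "t < 1" unfolding t_def using vl v01 by (simp add: divide_less_eq)
        have l1s: "(1 - t) * ln ?v0 + t * ln ?v1 < ln v"
          unfolding vt by (rule ln_comb_strict) (use v0pos v01 t t1 s_ge2[of l] in auto)
        have "(1 - t) * F ?v0 + t * F ?v1 = K + \<alpha> l * ((1 - t) * ln ?v0 + t * ln ?v1)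
               + A * ((1 - t) * ln (h ?v0) + t * ln (h ?v1))"
          unfolding F_def by (simp add: algebra_simps)
        also have "\<dots> < K + \<alpha> l * ln v + A * ln (h v)"
          using l1s l2 ap A by (intro add_less_le_mono add_strict_left_mono mult_strict_left_mono mult_left_mono) auto
        finally show ?thesis using mn unfolding F_def by linarith
      qed
      show ?thesis using comb mn strict by auto
    next
      case A: False
      have hv: "h v < h ?v0" unfolding h_def using vv m by (simp add: divide_strict_right_mono)
      have hvpos: "0 < h v" using hpos v v1e by simp
      have "ln (h v) < ln (h ?v0)" using hv hvpos by simp
      hence a2: "A * ln (h ?v0) < A * ln (h v)" using A by (simp add: mult_less_cancel_left)
      have a1: "\<alpha> l * ln ?v0 \<le> \<alpha> l * ln v" using al vv v0pos by (intro mult_left_mono) auto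
      have "F ?v0 < F v" unfolding F_def using a1 a2 by linarith
      thus ?thesis by (simp add: min.strict_coboundedI1)
    qed
  qed
  show "min (G n \<alpha> (xbar n l)) (G n \<alpha> (xbar n (Suc l))) \<le> G n \<alpha> (yv n l v)"
    using main F0 F1 FG by simp
  show "0 < \<alpha> l \<Longrightarrow> cc n l < v \<Longrightarrow> v < 1 / s l
         \<Longrightarrow> min (G n \<alpha> (xbar n l)) (G n \<alpha> (xbar n (Suc l))) < G n \<alpha> (yv n l v)"
    using main F0 F1 FG by simp
qed

lemma suffix_avg:
  assumes X: "x \<in> Xset n" and b: "1 \<le> b" "b < n" and j: "j \<le> b"
  shows "real (n - j) * (\<Sum>i=Suc b..n. x i) \<le> real (n - b) * (\<Sum>i=Suc j..n. x i)"
proof -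
  have split: "(\<Sum>i=Suc j..n. x i) = (\<Sum>i=Suc j..b. x i) + (\<Sum>i=Suc b..n. x i)"
    using j b by (intro sum_split_at) auto
  have s1: "real (b - j) * x b \<le> (\<Sum>i=Suc j..b. x i)"
  proof -
    have "(\<Sum>i=Suc j..b. x b) \<le> (\<Sum>i=Suc j..b. x i)" using X_dec[OF X] b by (intro sum_mono) auto
    thus ?thesis by simp
  qed
  have s2: "(\<Sum>i=Suc b..n. x i) \<le> real (n - b) * x b"
  proof -
    have "(\<Sum>i=Suc b..n. x i) \<le> (\<Sum>i=Suc b..n. x b)" using X_dec[OF X] b by (intro sum_mono) auto
    thus ?thesis by simp
  qed
  have nb: "0 \<le> real (n - b)" by simp
  have "real (n - b) * (real (b - j) * x b) \<le> real (n - b) * (\<Sum>i=Suc j..b. x i)"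
    using s1 nb by (rule mult_left_mono)
  moreover have "real (b - j) * (\<Sum>i=Suc b..n. x i) \<le> real (b - j) * (real (n - b) * x b)"
    using s2 by (intro mult_left_mono) auto
  moreover have "real (n - j) = real (b - j) + real (n - b)" using j b by simp
  ultimately show ?thesis unfolding split by (simp add: algebra_simps)
qed

lemma T_split:
  fixes z :: "nat \<Rightarrow> real"
  assumes "j \<le> b" "b \<le> n"
  shows "(\<Sum>i=Suc j..b. z i) = (\<Sum>i=Suc j..n. z i) - (\<Sum>i=Suc b..n. z i)"
proof -
  have "(\<Sum>i=Suc j..n. z i) = (\<Sum>i=Suc j..b. z i) + (\<Sum>i=Suc b..n. z i)"
    using assms by (intro sum_split_at) auto
  thus ?thesis by simp
qed

lemma G_split:
  assumes "b \<le> n"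
  shows "G n \<alpha> z = (\<Sum>i=1..b. \<alpha> i * ln (z i)) + (\<Sum>i=Suc b..n. \<alpha> i * ln (z i))"
  unfolding G_def using assms by (intro sum_split_at) auto

lemma yv_T_lo:
  assumes l: "1 \<le> l" "l < n" and j: "j < l"
  shows "(\<Sum>i=Suc j..n. yv n l v i) = ee j"
proof -
  have "(\<Sum>i=Suc j..n. yv n l v i) = (\<Sum>i=Suc j..l-1. yv n l v i) + (\<Sum>i=Suc (l-1)..n. yv n l v i)"
    using l j by (intro sum_split_at) auto
  also have "(\<Sum>i=Suc j..l-1. yv n l v i) = (\<Sum>i=Suc j..l-1. 1 / s i)"
    using l by (intro sum.cong) (auto simp: yv_def)
  also have "\<dots> = ee j - ee (l-1)" using j by (intro sum_inv_s_range) simp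
  also have "(\<Sum>i=Suc (l-1)..n. yv n l v i) = v + (\<Sum>i=Suc l..n. yv n l v i)"
    using l by (subst sum.atLeast_Suc_atMost) (auto simp: yv_def)
  also have "(\<Sum>i=Suc l..n. yv n l v i) = (\<Sum>i=Suc l..n. (ee (l - 1) - v) / real (n - l))"
    by (intro sum.cong) (auto simp: yv_def)
  also have "\<dots> = ee (l - 1) - v" using l by simp
  finally show ?thesis by simp
qed

lemma yv_T_hi:
  assumes l: "l \<le> j"
  shows "(\<Sum>i=Suc j..n. yv n l v i) = real (n - j) * ((ee (l - 1) - v) / real (n - l))"
proof -
  have "(\<Sum>i=Suc j..n. yv n l v i) = (\<Sum>i=Suc j..n. (ee (l - 1) - v) / real (n - l))"
    using l by (intro sum.cong) (auto simp: yv_def)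
  thus ?thesis by simp
qed

lemma dominate:
  fixes \<alpha> :: "nat \<Rightarrow> real"
  assumes n: "2 \<le> n" and b: "1 \<le> b" "b < n" and X: "x \<in> Xset n"
    and al0: "\<forall>i. 1 \<le> i \<longrightarrow> i \<le> b \<longrightarrow> 0 \<le> \<alpha> i"
    and alm: "\<forall>i. 1 \<le> i \<longrightarrow> i < b \<longrightarrow> \<alpha> i \<le> \<alpha> (Suc i)"
    and alt: "\<forall>i\<in>{Suc b..n}. \<alpha> i = \<alpha> (Suc b)" and be: "\<alpha> (Suc b) \<le> 0"
  shows "\<exists>l v. 1 \<le> l \<and> l \<le> b \<and> cc n l \<le> v \<and> v \<le> 1 / s l \<and> G n \<alpha> (yv n l v) \<le> G n \<alpha> x
     \<and> ((\<forall>i\<in>{1..b}. 0 < \<alpha> i) \<longrightarrow> (\<alpha> (Suc b) < 0 \<or> b = n - 1) \<longrightarrow> G n \<alpha> (yv n l v) = G n \<alpha> x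
          \<longrightarrow> (\<forall>i\<in>{1..n}. x i = yv n l v i))"
proof -
  define R where "R = (\<Sum>i=Suc b..n. x i)"
  define c where "c = R / real (n - b)"
  have xpos: "\<And>i. 1 \<le> i \<Longrightarrow> i \<le> n \<Longrightarrow> 0 < x i" using X_pos[OF X] by simp
  have Rpos: "0 < R" unfolding R_def using b xpos by (intro sum_pos) auto
  have nb: "0 < real (n - b)" using b by simp
  have cpos: "0 < c" unfolding c_def using Rpos nb by simp
  have Rc: "R = real (n - b) * c" unfolding c_def using nb by simp
  have sum1: "(\<Sum>i=Suc 0..n. x i) = 1" using X_sum[OF X] by simp
  define L where "L = {l\<in>{1..b}. c \<le> cc n l}"
  have c1: "c \<le> cc n 1"
  proof -
    have "real (n - 0) * R \<le> real (n - b) * 1" using suffix_avg[OF X b, of 0] sum1 unfolding R_def by simp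
    hence "real n * R \<le> real (n - b)" by simp
    hence "R / real (n - b) \<le> 1 / real n" using nb n by (simp add: field_simps)
    moreover have "real (n - 1 + 1) = real n" using n by simp
    ultimately show ?thesis unfolding c_def cc_def by (simp add: ee_0)
  qed
  have finL: "finite L" unfolding L_def by simp
  have L1in: "1 \<in> L" unfolding L_def using b c1 by simp
  define l where "l = Max L"
  have lL: "l \<in> L" unfolding l_def using finL L1in by (intro Max_in) auto
  hence l: "1 \<le> l" "l \<le> b" "c \<le> cc n l" unfolding L_def by auto
  have ln: "l < n" using l b by simp
  have cSuc: "cc n (Suc l) \<le> c"
  proof (cases "l < b")
    case True
    have "Suc l \<notin> L"
    proof
      assume "Suc l \<in> L"
      hence "Suc l \<le> l" unfolding l_def using finL by (intro Max_ge) auto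
      thus False by simp
    qed
    thus ?thesis using True unfolding L_def by auto
  next
    case False
    hence lb: "l = b" using l by simp
    have "ee b \<le> R" unfolding R_def by (rule L1T[OF X b(2)])
    thus ?thesis unfolding lb cc_def c_def using nb b by (simp add: divide_right_mono)
  qed
  define v where "v = ee (l - 1) - real (n - l) * c"
  have eecc: "ee (l - 1) = real (n - l + 1) * cc n l" unfolding cc_def by simp
  have v0: "cc n l \<le> v"
  proof -
    have "real (n - l) * c \<le> real (n - l) * cc n l" using l by (intro mult_left_mono) auto
    moreover have "real (n - l + 1) = real (n - l) + 1" by simp
    ultimately show ?thesis unfolding v_def eecc by (simp add: algebra_simps)
  qed
  have v1: "v \<le> 1 / s l"
  proof -
    have "ee (Suc (l-1)) = ee (l-1) - 1 / s (Suc (l-1))" by (rule ee_Suc)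
    hence e: "ee (l - 1) - 1 / s l = ee l" using l by simp
    have "cc n (Suc l) = ee l / real (n - l)" unfolding cc_def using ln by simp
    hence "ee l \<le> real (n - l) * c" using cSuc ln by (simp add: divide_le_eq mult.commute)
    thus ?thesis unfolding v_def using e by simp
  qed
  define y where "y = yv n l v"
  have ytail: "y i = c" if "l < i" for i
  proof -
    have "(ee (l - 1) - v) / real (n - l) = c" unfolding v_def using ln by simp
    thus ?thesis unfolding y_def yv_def using that by simp
  qed
  have ypos: "0 < y i" for i
  proof -
    have "0 < v" using v0 cc_pos[of n l] by simp
    thus ?thesis using ytail[of i] cpos s_ge2[of i] unfolding y_def yv_def by auto
  qed
  have Ty_lo: "(\<Sum>i=Suc j..n. y i) = ee j" if "j < l" for j unfolding y_def by (rule yv_T_lo[OF l(1) ln that])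
  have Ty_hi: "(\<Sum>i=Suc j..n. y i) = real (n - j) * c" if "l \<le> j" for j
  proof -
    have "(\<Sum>i=Suc j..n. y i) = (\<Sum>i=Suc j..n. c)" using ytail that by (intro sum.cong) auto
    thus ?thesis by simp
  qed
  have TyR: "(\<Sum>i=Suc b..n. y i) = R" using Ty_hi[of b] l Rc by simp
  have D: "\<forall>t. 1 \<le> t \<longrightarrow> t \<le> b \<longrightarrow> (\<Sum>i=t..b. y i) \<le> (\<Sum>i=t..b. x i)"
  proof (intro allI impI)
    fix t assume t: "1 \<le> t" "t \<le> b"
    have tt: "t = Suc (t - 1)" using t by simp
    have Ty: "(\<Sum>i=t..b. y i) = (\<Sum>i=Suc (t-1)..n. y i) - R"
      using T_split[of "t-1" b n y] t b TyR tt by simp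
    have Tx: "(\<Sum>i=t..b. x i) = (\<Sum>i=Suc (t-1)..n. x i) - R"
      using T_split[of "t-1" b n x] t b tt unfolding R_def by simp
    have "(\<Sum>i=Suc (t-1)..n. y i) \<le> (\<Sum>i=Suc (t-1)..n. x i)"
    proof (cases "t - 1 < l")
      case True
      thus ?thesis using Ty_lo[OF True] L1T[OF X, of "t-1"] t b by simp
    next
      case False
      have A1: "real (n - (t-1)) * R \<le> real (n - b) * (\<Sum>i=Suc (t-1)..n. x i)"
        using suffix_avg[OF X b, of "t-1"] t unfolding R_def by simp
      have A2: "real (n - b) * (real (n - (t-1)) * c) = real (n - (t-1)) * R"
        unfolding Rc by (simp add: ac_simps)
      have "real (n - b) * (real (n - (t-1)) * c) \<le> real (n - b) * (\<Sum>i=Suc (t-1)..n. x i)"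
        using A1 by (simp only: A2)
      hence "real (n - (t-1)) * c \<le> (\<Sum>i=Suc (t-1)..n. x i)"
        using nb by (rule mult_left_le_imp_le)
      thus ?thesis using Ty_hi[of "t-1"] False by simp
    qed
    thus "(\<Sum>i=t..b. y i) \<le> (\<Sum>i=t..b. x i)" using Ty Tx by simp
  qed
  have pos: "\<forall>i\<in>{1..b}. 0 < x i \<and> 0 < y i" using xpos ypos b by auto
  have dec: "\<forall>i. 1 \<le> i \<longrightarrow> i < b \<longrightarrow> x (Suc i) \<le> x i" using X_adj[OF X] b by auto
  note H = head_ineq[OF pos dec al0 alm D]
  have tpos: "\<forall>i\<in>{Suc b..n}. 0 < x i" using xpos by auto
  note Tl = tail_ineq[OF b(2) tpos c_def[unfolded R_def] be]
  have alt': "\<alpha> i = \<alpha> (Suc b)" if "i \<in> {Suc b..n}" for i using alt that by blast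
  have tailx: "(\<Sum>i=Suc b..n. \<alpha> i * ln (x i)) = (\<Sum>i=Suc b..n. \<alpha> (Suc b) * ln (x i))"
  proof (rule sum.cong)
    fix i assume "i \<in> {Suc b..n}"
    thus "\<alpha> i * ln (x i) = \<alpha> (Suc b) * ln (x i)" using alt' by metis
  qed simp
  have taily: "(\<Sum>i=Suc b..n. \<alpha> i * ln (y i)) = \<alpha> (Suc b) * real (n - b) * ln c"
  proof -
    have "(\<Sum>i=Suc b..n. \<alpha> i * ln (y i)) = (\<Sum>i=Suc b..n. \<alpha> (Suc b) * ln c)"
    proof (rule sum.cong)
      fix i assume i: "i \<in> {Suc b..n}"
      hence "y i = c" using ytail l by simp
      thus "\<alpha> i * ln (y i) = \<alpha> (Suc b) * ln c" using alt'[OF i] by metis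
    qed simp
    thus ?thesis by simp
  qed
  have Gy: "G n \<alpha> y = (\<Sum>i=1..b. \<alpha> i * ln (y i)) + \<alpha> (Suc b) * real (n - b) * ln c"
    using G_split[of b n \<alpha> y] b taily by simp
  have Gx: "G n \<alpha> x = (\<Sum>i=1..b. \<alpha> i * ln (x i)) + (\<Sum>i=Suc b..n. \<alpha> (Suc b) * ln (x i))"
    using G_split[of b n \<alpha> x] b tailx by simp
  have le: "G n \<alpha> y \<le> G n \<alpha> x" using Gx Gy H(1) Tl(1) by linarith
  have st: "(\<forall>i\<in>{1..b}. 0 < \<alpha> i) \<longrightarrow> (\<alpha> (Suc b) < 0 \<or> b = n - 1) \<longrightarrow> G n \<alpha> y = G n \<alpha> x
          \<longrightarrow> (\<forall>i\<in>{1..n}. x i = y i)"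
  proof (intro impI)
    assume ap: "\<forall>i\<in>{1..b}. 0 < \<alpha> i" and tb: "\<alpha> (Suc b) < 0 \<or> b = n - 1" and eq: "G n \<alpha> y = G n \<alpha> x"
    have eh: "(\<Sum>i=1..b. \<alpha> i * ln (y i)) = (\<Sum>i=1..b. \<alpha> i * ln (x i))"
      using Gx Gy H(1) Tl(1) eq by linarith
    have et: "\<alpha> (Suc b) * real (n - b) * ln c = (\<Sum>i=Suc b..n. \<alpha> (Suc b) * ln (x i))"
      using Gx Gy H(1) Tl(1) eq by linarith
    have hx: "\<forall>i\<in>{1..b}. x i = y i" using H(2)[OF ap eh] .
    have tx: "\<forall>i\<in>{Suc b..n}. x i = c"
    proof (cases "\<alpha> (Suc b) < 0")
      case True then show ?thesis using Tl(2)[OF True et] by simp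
    next
      case False
      hence bn: "b = n - 1" using tb by simp
      hence "{Suc b..n} = {n}" using b by auto
      moreover have "x n = c" unfolding c_def R_def using bn b by (simp add: \<open>{Suc b..n} = {n}\<close>)
      ultimately show ?thesis by simp
    qed
    show "\<forall>i\<in>{1..n}. x i = y i"
    proof
      fix i assume i: "i \<in> {1..n}"
      show "x i = y i"
      proof (cases "i \<le> b")
        case True then show ?thesis using hx i by simp
      next
        case False then show ?thesis using tx ytail[of i] l i by simp
      qed
    qed
  qed
  have l12: "1 \<le> l" "l \<le> b" using l by auto
  have st': "(\<forall>i\<in>{1..b}. 0 < \<alpha> i) \<longrightarrow> (\<alpha> (Suc b) < 0 \<or> b = n - 1) \<longrightarrow> G n \<alpha> (yv n l v) = G n \<alpha> x
          \<longrightarrow> (\<forall>i\<in>{1..n}. x i = yv n l v i)" using st unfolding y_def .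
  have le': "G n \<alpha> (yv n l v) \<le> G n \<alpha> x" using le unfolding y_def .
  show ?thesis
    apply (rule exI[of _ l])
    apply (rule exI[of _ v])
    using l12 v0 v1 le' st' by (intro conjI)
qed

lemma fobj_G: assumes X: "x \<in> Xset n" shows "fobj n \<alpha> x = exp (G n \<alpha> x)"
proof -
  have "fobj n \<alpha> x = (\<Prod>i=1..n. exp (\<alpha> i * ln (x i)))"
    unfolding fobj_def
  proof (rule prod.cong)
    fix i assume "i \<in> {1..n}"
    hence "0 < x i" using X_pos[OF X] by simp
    thus "x i powr \<alpha> i = exp (\<alpha> i * ln (x i))" by (simp add: powr_def)
  qed simp
  also have "\<dots> = exp (G n \<alpha> x)" unfolding G_def by (simp add: exp_sum)
  finally show ?thesis .
qed

lemma weak_core: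
  fixes \<alpha> :: "nat \<Rightarrow> real"
  assumes n: "2 \<le> n" and b: "1 \<le> b" "b \<le> n" and X: "x \<in> Xset n"
    and al0: "\<forall>i. 1 \<le> i \<longrightarrow> i \<le> b \<longrightarrow> 0 \<le> \<alpha> i"
    and alm: "\<forall>i. 1 \<le> i \<longrightarrow> i < b \<longrightarrow> \<alpha> i \<le> \<alpha> (Suc i)"
    and alt: "b < n \<longrightarrow> (\<forall>i\<in>{Suc b..n}. \<alpha> i = \<alpha> (Suc b))" and be: "b < n \<longrightarrow> \<alpha> (Suc b) \<le> 0"
  shows "\<exists>l\<in>{1..n}. G n \<alpha> (xbar n l) \<le> G n \<alpha> x"
    and "(\<forall>i\<in>{1..b}. 0 < \<alpha> i) \<Longrightarrow> (b < n \<longrightarrow> \<alpha> (Suc b) < 0 \<or> b = n - 1)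
         \<Longrightarrow> (\<forall>l\<in>{1..n}. G n \<alpha> x \<le> G n \<alpha> (xbar n l)) \<Longrightarrow> inY n x"
proof -
  have res: "(\<exists>l\<in>{1..n}. G n \<alpha> (xbar n l) \<le> G n \<alpha> x) \<and>
      ((\<forall>i\<in>{1..b}. 0 < \<alpha> i) \<longrightarrow> (b < n \<longrightarrow> \<alpha> (Suc b) < 0 \<or> b = n - 1)
         \<longrightarrow> (\<forall>l\<in>{1..n}. G n \<alpha> x \<le> G n \<alpha> (xbar n l)) \<longrightarrow> inY n x)"
  proof (cases "b < n")
    case True
    obtain l v where l: "1 \<le> l" "l \<le> b" and v: "cc n l \<le> v" "v \<le> 1 / s l"
      and le: "G n \<alpha> (yv n l v) \<le> G n \<alpha> x"
      and st: "(\<forall>i\<in>{1..b}. 0 < \<alpha> i) \<longrightarrow> (\<alpha> (Suc b) < 0 \<or> b = n - 1) \<longrightarrow> G n \<alpha> (yv n l v) = G n \<alpha> x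
          \<longrightarrow> (\<forall>i\<in>{1..n}. x i = yv n l v i)"
      using dominate[OF n b(1) True X al0 alm mp[OF alt True] mp[OF be True]] by blast
    have ln: "l < n" using l True by simp
    have al: "0 \<le> \<alpha> l" using al0 l by simp
    note CU = curve[where l=l and n=n and \<alpha>=\<alpha> and v=v, OF l(1) ln al v]
    have m1: "min (G n \<alpha> (xbar n l)) (G n \<alpha> (xbar n (Suc l))) \<le> G n \<alpha> x" using CU(1) le by simp
    have ex: "\<exists>l\<in>{1..n}. G n \<alpha> (xbar n l) \<le> G n \<alpha> x"
    proof (cases "G n \<alpha> (xbar n l) \<le> G n \<alpha> (xbar n (Suc l))")
      case True then show ?thesis using m1 l ln by (intro bexI[of _ l]) auto
    next
      case False then show ?thesis using m1 l ln by (intro bexI[of _ "Suc l"]) auto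
    qed
    have sc: "inY n x" if ap: "\<forall>i\<in>{1..b}. 0 < \<alpha> i" and tb: "b < n \<longrightarrow> \<alpha> (Suc b) < 0 \<or> b = n - 1"
      and mn: "\<forall>l\<in>{1..n}. G n \<alpha> x \<le> G n \<alpha> (xbar n l)"
    proof -
      have g1: "G n \<alpha> x \<le> G n \<alpha> (xbar n l)" using mn l ln by simp
      have g2: "G n \<alpha> x \<le> G n \<alpha> (xbar n (Suc l))" using mn l ln by simp
      have eqG: "G n \<alpha> (yv n l v) = G n \<alpha> x" using CU(1) le g1 g2 by linarith
      have tb': "\<alpha> (Suc b) < 0 \<or> b = n - 1" using tb True by simp
      have xy: "\<forall>i\<in>{1..n}. x i = yv n l v i" using st ap tb' eqG by blast
      have alp: "0 < \<alpha> l" using ap l by simp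
      have "\<not> (cc n l < v \<and> v < 1 / s l)"
      proof
        assume "cc n l < v \<and> v < 1 / s l"
        hence "min (G n \<alpha> (xbar n l)) (G n \<alpha> (xbar n (Suc l))) < G n \<alpha> (yv n l v)"
          using CU(2) alp by simp
        thus False using eqG g1 g2 by linarith
      qed
      hence "v = cc n l \<or> v = 1 / s l" using v by linarith
      thus "inY n x"
      proof
        assume "v = cc n l"
        hence "\<forall>i\<in>{1..n}. x i = xbar n l i" using xy yv_xbar0[OF l(1) ln] by simp
        thus ?thesis unfolding inY_def using l ln by (intro bexI[of _ l]) auto
      next
        assume "v = 1 / s l"
        hence "\<forall>i\<in>{1..n}. x i = xbar n (Suc l) i" using xy yv_xbar1[OF l(1) ln] by simp
        thus ?thesis unfolding inY_def using l ln by (intro bexI[of _ "Suc l"]) auto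
      qed
    qed
    show ?thesis using ex sc by blast
  next
    case False
    hence bn: "b = n" using b by simp
    let ?y = "xbar n n"
    have n1: "1 \<le> n" using n by simp
    have spos: "0 < s i" for i using s_ge2[of i] by linarith
    have pos: "\<forall>i\<in>{1..b}. 0 < x i \<and> 0 < ?y i"
      using X_pos[OF X] bn cc_pos[of n n] spos by (auto simp: xbar_val[OF n1])
    have dec: "\<forall>i. 1 \<le> i \<longrightarrow> i < b \<longrightarrow> x (Suc i) \<le> x i" using X_adj[OF X] bn by auto
    have D: "\<forall>t. 1 \<le> t \<longrightarrow> t \<le> b \<longrightarrow> (\<Sum>i=t..b. ?y i) \<le> (\<Sum>i=t..b. x i)"
    proof (intro allI impI)
      fix t assume t: "1 \<le> t" "t \<le> b"
      have tt: "t = Suc (t - 1)" using t by simp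
      have "(\<Sum>i=t..n. ?y i) = ee (t - 1)"
        using xbar_T_lo[OF n1 order.refl, of "t-1"] t bn tt by simp
      moreover have "ee (t - 1) \<le> (\<Sum>i=t..n. x i)" using L1T[OF X, of "t-1"] t bn tt by simp
      ultimately show "(\<Sum>i=t..b. ?y i) \<le> (\<Sum>i=t..b. x i)" using bn by simp
    qed
    note H = head_ineq[OF pos dec al0 alm D]
    have ex: "\<exists>l\<in>{1..n}. G n \<alpha> (xbar n l) \<le> G n \<alpha> x"
      using H(1) n1 bn unfolding G_def by (intro bexI[of _ n]) auto
    have sc: "inY n x" if ap: "\<forall>i\<in>{1..b}. 0 < \<alpha> i"
      and mn: "\<forall>l\<in>{1..n}. G n \<alpha> x \<le> G n \<alpha> (xbar n l)"
    proof -
      have "G n \<alpha> x \<le> G n \<alpha> ?y" using mn n1 by simp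
      hence eq: "(\<Sum>i=1..b. \<alpha> i * ln (?y i)) = (\<Sum>i=1..b. \<alpha> i * ln (x i))"
        using H(1) bn unfolding G_def by simp
      have "\<forall>i\<in>{1..n}. x i = ?y i" using H(2)[OF ap eq] bn by simp
      thus ?thesis unfolding inY_def using n1 by (intro bexI[of _ n]) auto
    qed
    show ?thesis using ex sc by blast
  qed
  show "\<exists>l\<in>{1..n}. G n \<alpha> (xbar n l) \<le> G n \<alpha> x" using res by blast
  show "(\<forall>i\<in>{1..b}. 0 < \<alpha> i) \<Longrightarrow> (b < n \<longrightarrow> \<alpha> (Suc b) < 0 \<or> b = n - 1)
         \<Longrightarrow> (\<forall>l\<in>{1..n}. G n \<alpha> x \<le> G n \<alpha> (xbar n l)) \<Longrightarrow> inY n x" using res by blast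
qed

theorem mainTheorem12:
  fixes n b :: nat and \<alpha> :: "nat \<Rightarrow> real"
  assumes "n \<ge> 2" and "b \<in> {1..n}"
    and "\<And>i j. 1 \<le> i \<Longrightarrow> i \<le> j \<Longrightarrow> j \<le> b \<Longrightarrow> 0 \<le> \<alpha> i \<and> \<alpha> i \<le> \<alpha> j"
    and "\<And>i j. b < i \<Longrightarrow> i \<le> n \<Longrightarrow> b < j \<Longrightarrow> j \<le> n \<Longrightarrow> \<alpha> i = \<alpha> j \<and> \<alpha> i \<le> 0"
  shows "(\<exists>x. is_minimizer n \<alpha> x \<and> inY n x)
    \<and> ((\<forall>i\<in>{1..n}. \<alpha> i \<noteq> 0) \<longrightarrow> (\<forall>x. is_minimizer n \<alpha> x \<longrightarrow> inY n x))
    \<and> ((b = n - 1 \<and> (\<forall>i\<in>{1..<n}. 0 < \<alpha> i) \<and> \<alpha> n = 0)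
         \<longrightarrow> (\<forall>x. is_minimizer n \<alpha> x \<longrightarrow> inY n x))"
proof -
  have n: "2 \<le> n" using assms(1) .
  have b: "1 \<le> b" "b \<le> n" using assms(2) by auto
  have al0: "\<forall>i. 1 \<le> i \<longrightarrow> i \<le> b \<longrightarrow> 0 \<le> \<alpha> i" using assms(3) by blast
  have alm: "\<forall>i. 1 \<le> i \<longrightarrow> i < b \<longrightarrow> \<alpha> i \<le> \<alpha> (Suc i)"
  proof (intro allI impI)
    fix i assume "1 \<le> i" "i < b"
    thus "\<alpha> i \<le> \<alpha> (Suc i)" using assms(3)[of i "Suc i"] by simp
  qed
  have alt: "b < n \<longrightarrow> (\<forall>i\<in>{Suc b..n}. \<alpha> i = \<alpha> (Suc b))"
  proof (intro impI ballI)
    fix i assume "b < n" "i \<in> {Suc b..n}"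
    thus "\<alpha> i = \<alpha> (Suc b)" using assms(4)[of i "Suc b"] by simp
  qed
  have be': "\<alpha> (Suc b) \<le> 0" if "b < n" using assms(4)[of "Suc b" "Suc b"] that by simp
  have be: "b < n \<longrightarrow> \<alpha> (Suc b) \<le> 0" using be' by blast
  note WC = weak_core[OF n b _ al0 alm alt be]
  define l0 where "l0 = arg_min_on (\<lambda>l. G n \<alpha> (xbar n l)) {1..n}"
  have l0: "l0 \<in> {1..n}" unfolding l0_def using n by (intro arg_min_if_finite) auto
  have l0min: "G n \<alpha> (xbar n l0) \<le> G n \<alpha> (xbar n l)" if "l \<in> {1..n}" for l
    unfolding l0_def using that n by (intro arg_min_least) auto
  have xl0: "xbar n l0 \<in> Xset n" using xbar_in_X[OF n] l0 by simp
  have minz: "is_minimizer n \<alpha> (xbar n l0)"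
    unfolding is_minimizer_def
  proof (intro conjI ballI)
    show "xbar n l0 \<in> Xset n" by (rule xl0)
    fix y assume y: "y \<in> Xset n"
    obtain l where l: "l \<in> {1..n}" "G n \<alpha> (xbar n l) \<le> G n \<alpha> y" using WC(1)[OF y] by blast
    have "G n \<alpha> (xbar n l0) \<le> G n \<alpha> y" using l0min[OF l(1)] l(2) by linarith
    thus "fobj n \<alpha> (xbar n l0) \<le> fobj n \<alpha> y" using fobj_G[OF xl0] fobj_G[OF y] by simp
  qed
  have inY0: "inY n (xbar n l0)" unfolding inY_def using l0 by blast
  have minG: "\<forall>l\<in>{1..n}. G n \<alpha> x \<le> G n \<alpha> (xbar n l)" if "is_minimizer n \<alpha> x" for x
  proof
    fix l assume l: "l \<in> {1..n}"
    have X: "x \<in> Xset n" using that unfolding is_minimizer_def by simp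
    have xl: "xbar n l \<in> Xset n" using xbar_in_X[OF n] l by simp
    have "fobj n \<alpha> x \<le> fobj n \<alpha> (xbar n l)" using that xl unfolding is_minimizer_def by simp
    thus "G n \<alpha> x \<le> G n \<alpha> (xbar n l)" using fobj_G[OF X] fobj_G[OF xl] by simp
  qed
  have partb: "(\<forall>i\<in>{1..n}. \<alpha> i \<noteq> 0) \<longrightarrow> (\<forall>x. is_minimizer n \<alpha> x \<longrightarrow> inY n x)"
  proof (intro impI allI)
    fix x assume nz: "\<forall>i\<in>{1..n}. \<alpha> i \<noteq> 0" and mz: "is_minimizer n \<alpha> x"
    have X: "x \<in> Xset n" using mz unfolding is_minimizer_def by simp
    have ap: "\<forall>i\<in>{1..b}. 0 < \<alpha> i"
    proof
      fix i assume i: "i \<in> {1..b}"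
      hence "0 \<le> \<alpha> i" "\<alpha> i \<noteq> 0" using al0 nz b by auto
      thus "0 < \<alpha> i" by simp
    qed
    have tb: "b < n \<longrightarrow> \<alpha> (Suc b) < 0 \<or> b = n - 1"
    proof
      assume bn: "b < n"
      have "\<alpha> (Suc b) \<noteq> 0" using nz bn by simp
      thus "\<alpha> (Suc b) < 0 \<or> b = n - 1" using be'[OF bn] by simp
    qed
    show "inY n x" by (rule WC(2)[OF X ap tb minG[OF mz]])
  qed
  have partc: "(b = n - 1 \<and> (\<forall>i\<in>{1..<n}. 0 < \<alpha> i) \<and> \<alpha> n = 0)
         \<longrightarrow> (\<forall>x. is_minimizer n \<alpha> x \<longrightarrow> inY n x)"
  proof (intro impI allI)
    fix x assume h: "b = n - 1 \<and> (\<forall>i\<in>{1..<n}. 0 < \<alpha> i) \<and> \<alpha> n = 0" and mz: "is_minimizer n \<alpha> x"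
    have X: "x \<in> Xset n" using mz unfolding is_minimizer_def by simp
    have ap: "\<forall>i\<in>{1..b}. 0 < \<alpha> i" using h n by auto
    have tb: "b < n \<longrightarrow> \<alpha> (Suc b) < 0 \<or> b = n - 1" using h by simp
    show "inY n x" by (rule WC(2)[OF X ap tb minG[OF mz]])
  qed
  show ?thesis using minz inY0 partb partc by blast
qed

end
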